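(* For every $n\in\mathbb{N}$, $\beta>0$, $\lambda$ with $n>\lambda\ge 2\log\frac{2}{\beta}$, and $x\in\{0,1\}^n$, \[ \Pr\left[\left|P_{n,\lambda}(x)-\sum_{i=1}^n x_i\right|>\sqrt{2\lambda\log(2/\beta)}\cdot\frac{n}{n-\lambda}\right]\le\beta. \]
   Context: $P_{n,\lambda}(x)$ denotes the output of the bit-sum protocol: each of $n$ users with $x_i\in\{0,1\}$ independently draws $b\sim\mathrm{Ber}(\lambda/n)$ and sends $y_i=x_i$ if $b=0$ and a fresh $\mathrm{Ber}(1/2)$ bit if $b=1$; the messages are shuffled uniformly at random; the analyzer outputs $\frac{n}{n-\lambda}\left(\sum_{i=1}^n y_i-\frac{\lambda}{2}\right)$. $\log$ is the natural logarithm. *)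

theory Defs
  imports "HOL-Probability.Probability" "HOL-Combinatorics.Permutations"
begin

definition local_rand :: "nat \<Rightarrow> real \<Rightarrow> bool \<Rightarrow> bool pmf" where
  "local_rand n lam x =
     bernoulli_pmf (lam / real n) \<bind> (\<lambda>b. if b then bernoulli_pmf (1/2) else return_pmf x)"

fun rand_all :: "nat \<Rightarrow> real \<Rightarrow> bool list \<Rightarrow> bool list pmf" where
  "rand_all n lam [] = return_pmf []"
| "rand_all n lam (x # xs) =
     local_rand n lam x \<bind> (\<lambda>y. rand_all n lam xs \<bind> (\<lambda>ys. return_pmf (y # ys)))"

definition shuffle :: "'a list \<Rightarrow> 'a list pmf" where
  "shuffle ys = map_pmf (\<lambda>\<pi>. permute_list \<pi> ys)
                  (pmf_of_set {\<pi>. \<pi> permutes {..<length ys}})"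

definition bit_sum :: "bool list \<Rightarrow> real" where
  "bit_sum ys = (\<Sum>i<length ys. if ys ! i then 1 else 0)"

definition analyzer :: "nat \<Rightarrow> real \<Rightarrow> bool list \<Rightarrow> real" where
  "analyzer n lam ys = real n / (real n - lam) * (bit_sum ys - lam / 2)"

definition P_protocol :: "nat \<Rightarrow> real \<Rightarrow> bool list \<Rightarrow> real pmf" where
  "P_protocol n lam xs =
     rand_all n lam xs \<bind> (\<lambda>ys. map_pmf (analyzer n lam) (shuffle ys))"

end

theory Submission imports Defs begin

lemma exp_quad: fixes u :: real assumes "\<bar>u\<bar> \<le> 1" shows "exp u \<le> 1 + u + u\<^sup>2"
proof (cases "u \<ge> 0")
  case True then show ?thesis using exp_bound assms by auto
next
  case False
  define v where "v = - u"
  have v: "v > 0" "v \<le> 1" using False assms by (auto simp: v_def)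
  have e: "1 + v + v\<^sup>2 / 2 \<le> exp v" using exp_lower_Taylor_quadratic v by auto
  have pos: "0 < 1 + v + v\<^sup>2 / 2" using v by (simp add: add_pos_nonneg)
  have "exp u = 1 / exp v" by (simp add: v_def exp_minus field_simps)
  also have "\<dots> \<le> 1 / (1 + v + v\<^sup>2 / 2)" using e pos by (intro divide_left_mono) auto
  also have "\<dots> \<le> 1 - v + v\<^sup>2"
  proof -
    have "(1 - v + v\<^sup>2) * (1 + v + v\<^sup>2 / 2) = 1 + v\<^sup>2 * (1 + v + v\<^sup>2) / 2"
      by (simp add: algebra_simps power2_eq_square add_divide_distrib diff_divide_distrib)
    moreover have "0 \<le> v\<^sup>2 * (1 + v + v\<^sup>2) / 2" using v by simp
    ultimately have "1 \<le> (1 - v + v\<^sup>2) * (1 + v + v\<^sup>2 / 2)" by linarith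
    then show ?thesis using pos by (simp add: divide_le_eq)
  qed
  finally show ?thesis by (simp add: v_def)
qed

lemma loc_real: fixes u q :: real assumes "\<bar>u\<bar> \<le> 1" "0 \<le> q"
  shows "exp (- u * q) * (1 + q * (exp u - 1)) \<le> exp (q * u\<^sup>2)"
proof -
  have "1 + q * (exp u - 1) \<le> exp (q * (exp u - 1))" by (rule exp_ge_add_one_self)
  also have "\<dots> \<le> exp (q * (u + u\<^sup>2))" using exp_quad[OF assms(1)] assms(2)
    by (intro exp_mono mult_left_mono) auto
  finally have "exp (- u * q) * (1 + q * (exp u - 1)) \<le> exp (- u * q) * exp (q * (u + u\<^sup>2))"
    by (intro mult_left_mono) auto
  also have "\<dots> = exp (- u * q + q * (u + u\<^sup>2))" by (rule mult_exp_exp)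
  also have "\<dots> = exp (q * u\<^sup>2)" by (simp add: algebra_simps)
  finally show ?thesis .
qed

lemma bit_sum_Nil[simp]: "bit_sum [] = 0" by (simp add: bit_sum_def)

lemma bit_sum_Cons[simp]: "bit_sum (y # ys) = (if y then 1 else 0) + bit_sum ys"
  unfolding bit_sum_def by (simp add: sum.lessThan_Suc_shift del: sum.lessThan_Suc)

lemma bit_sum_list: "bit_sum ys = sum_list (map (\<lambda>y. if y then 1 else 0) ys)"
  by (induction ys) auto

lemma bit_sum_perm:
  assumes "\<pi> permutes {..<length ys}"
  shows "bit_sum (permute_list \<pi> ys) = bit_sum ys"
proof -
  have "bit_sum zs = sum_mset (image_mset (\<lambda>y. if y then 1 else 0) (mset zs))" for zs
    by (metis mset_map sum_mset_sum_list bit_sum_list)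
  then show ?thesis using assms by simp
qed

lemma P_eq: "P_protocol n lam xs = map_pmf (analyzer n lam) (rand_all n lam xs)"
proof -
  have "map_pmf (analyzer n lam) (shuffle ys) = return_pmf (analyzer n lam ys)" for ys
  proof -
    let ?S = "{\<pi>. \<pi> permutes {..<length ys}}"
    have fin: "finite ?S" by (rule finite_permutations) simp
    have ne: "?S \<noteq> {}" using permutes_id by blast
    have "map_pmf (analyzer n lam) (shuffle ys) = map_pmf (\<lambda>\<pi>. analyzer n lam (permute_list \<pi> ys)) (pmf_of_set ?S)"
      unfolding shuffle_def by (simp add: map_pmf_comp)
    also have "\<dots> = map_pmf (\<lambda>_. analyzer n lam ys) (pmf_of_set ?S)"
      by (rule map_pmf_cong) (use fin ne in \<open>auto simp: analyzer_def bit_sum_perm\<close>)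
    finally show ?thesis by simp
  qed
  then show ?thesis unfolding P_protocol_def by (simp add: map_pmf_def)
qed

definition mm :: "real \<Rightarrow> bool list \<Rightarrow> real" where
  "mm q xs = sum_list (map (\<lambda>x. if x then 1 - q else q) xs)"

lemma mm_Nil[simp]: "mm q [] = 0" by (simp add: mm_def)
lemma mm_Cons[simp]: "mm q (x # xs) = (if x then 1 - q else q) + mm q xs" by (simp add: mm_def)

lemma mm_eq: "mm q xs = (1 - 2 * q) * bit_sum xs + real (length xs) * q"
  by (induction xs) (auto simp: algebra_simps)

lemma enn_lin:
  "0 \<le> a \<Longrightarrow> 0 \<le> b \<Longrightarrow> 0 \<le> c \<Longrightarrow> 0 \<le> d \<Longrightarrow>
   ennreal a * ennreal b + ennreal c * ennreal d = ennreal (a * b + c * d)"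
  by (simp add: ennreal_mult ennreal_plus)

lemma local_nn:
  assumes "0 \<le> lam / real n" "lam / real n \<le> 1" "\<And>y. g y \<ge> 0"
  shows "(\<integral>\<^sup>+y. ennreal (g y) \<partial>local_rand n lam x)
       = ennreal (lam / real n * (g True / 2 + g False / 2) + (1 - lam / real n) * g x)"
proof -
  define p where "p = lam / real n"
  have p: "0 \<le> p" "p \<le> 1" using assms by (auto simp: p_def)
  have g: "0 \<le> g y" for y using assms by auto
  define G where "G = g True / 2 + g False / 2"
  have G: "0 \<le> G" using g unfolding G_def by (simp add: add_nonneg_nonneg)
  have inner: "(\<integral>\<^sup>+y. ennreal (g y) \<partial>bernoulli_pmf (1/2)) = ennreal G"
  proof -
    have "(\<integral>\<^sup>+y. ennreal (g y) \<partial>bernoulli_pmf (1/2))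
          = ennreal (g True) * ennreal (1/2) + ennreal (g False) * ennreal (1 - 1/2)"
      by (rule nn_integral_bernoulli_pmf) auto
    also have "\<dots> = ennreal (g True * (1/2) + g False * (1 - 1/2))"
      by (rule enn_lin) (use g in auto)
    finally show ?thesis unfolding G_def by simp
  qed
  have "(\<integral>\<^sup>+y. ennreal (g y) \<partial>local_rand n lam x)
        = (\<integral>\<^sup>+b. ennreal (if b then G else g x) \<partial>bernoulli_pmf p)"
    unfolding local_rand_def p_def[symmetric] nn_integral_bind_pmf
    by (intro nn_integral_cong) (auto simp: inner nn_integral_return)
  also have "\<dots> = ennreal G * ennreal p + ennreal (g x) * ennreal (1 - p)"
    by (subst nn_integral_bernoulli_pmf) (use p in auto)
  also have "\<dots> = ennreal (G * p + g x * (1 - p))"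
    by (rule enn_lin) (use p g G in auto)
  finally show ?thesis unfolding p_def G_def by (simp add: algebra_simps)
qed

lemma local_bound:
  assumes "0 \<le> lam / real n" "lam / real n \<le> 1" "\<bar>s\<bar> \<le> 1"
  shows "(\<integral>\<^sup>+y. ennreal (exp (s * ((if y then 1 else 0) - (if x then 1 - lam / (2 * real n) else lam / (2 * real n)))))
           \<partial>local_rand n lam x) \<le> ennreal (exp (lam / (2 * real n) * s\<^sup>2))"
proof -
  define q where "q = lam / (2 * real n)"
  have q: "0 \<le> q" "lam / real n = 2 * q" using assms by (auto simp: q_def)
  have "lam / real n * (exp (s * (1 - (if x then 1 - q else q))) / 2 + exp (s * (0 - (if x then 1 - q else q))) / 2)
        + (1 - lam / real n) * exp (s * ((if x then 1 else 0) - (if x then 1 - q else q))) \<le> exp (q * s\<^sup>2)"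
  proof (cases x)
    case True
    have e: "exp (s * (0 - (1 - q))) = exp (-s) * exp (s * q)" by (subst mult_exp_exp) (simp add: algebra_simps)
    have "lam / real n * (exp (s * (1 - (1 - q))) / 2 + exp (s * (0 - (1 - q))) / 2)
        + (1 - lam / real n) * exp (s * (1 - (1 - q))) = exp (- (-s) * q) * (1 + q * (exp (-s) - 1))"
      unfolding q(2) e by (simp add: algebra_simps)
    also have "\<dots> \<le> exp (q * (-s)\<^sup>2)" by (rule loc_real) (use assms q in auto)
    finally show ?thesis using True by simp
  next
    case False
    have e: "exp (s * (1 - q)) = exp s * exp (- s * q)" by (subst mult_exp_exp) (simp add: algebra_simps)
    have "lam / real n * (exp (s * (1 - q)) / 2 + exp (s * (0 - q)) / 2)
        + (1 - lam / real n) * exp (s * (0 - q)) = exp (- s * q) * (1 + q * (exp s - 1))"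
      unfolding q(2) e by (simp add: algebra_simps)
    also have "\<dots> \<le> exp (q * s\<^sup>2)" by (rule loc_real) (use assms q in auto)
    finally show ?thesis using False by simp
  qed
  then show ?thesis
    by (subst local_nn) (use assms in \<open>auto simp: q_def intro!: ennreal_leI\<close>)
qed

lemma mgf:
  assumes "0 \<le> lam / real n" "lam / real n \<le> 1" "\<bar>s\<bar> \<le> 1"
  shows "(\<integral>\<^sup>+ys. ennreal (exp (s * (bit_sum ys - mm (lam / (2 * real n)) xs))) \<partial>rand_all n lam xs)
         \<le> ennreal (exp (real (length xs) * (lam / (2 * real n)) * s\<^sup>2))"
proof (induction xs)
  case Nil
  then show ?case by simp
next
  case (Cons x xs)
  define q where "q = lam / (2 * real n)"
  define A where "A = (\<lambda>y. ennreal (exp (s * ((if y then 1 else 0) - (if x then 1 - q else q)))))"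
  define B where "B = (\<lambda>ys. ennreal (exp (s * (bit_sum ys - mm q xs))))"
  have IH: "(\<integral>\<^sup>+ys. B ys \<partial>rand_all n lam xs) \<le> ennreal (exp (real (length xs) * q * s\<^sup>2))"
    using Cons.IH unfolding B_def q_def .
  have split: "ennreal (exp (s * (bit_sum (y # ys) - mm q (x # xs)))) = A y * B ys" for y ys
    unfolding A_def B_def
    by (simp add: ennreal_mult[symmetric] mult_exp_exp algebra_simps)
  have "(\<integral>\<^sup>+ys. ennreal (exp (s * (bit_sum ys - mm q (x # xs)))) \<partial>rand_all n lam (x # xs))
      = (\<integral>\<^sup>+y. (\<integral>\<^sup>+ys. A y * B ys \<partial>rand_all n lam xs) \<partial>local_rand n lam x)"
    by (simp del: bit_sum_Cons mm_Cons add: split)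
  also have "\<dots> = (\<integral>\<^sup>+y. A y * (\<integral>\<^sup>+ys. B ys \<partial>rand_all n lam xs) \<partial>local_rand n lam x)"
    by (simp add: nn_integral_cmult)
  also have "\<dots> \<le> (\<integral>\<^sup>+y. A y * ennreal (exp (real (length xs) * q * s\<^sup>2)) \<partial>local_rand n lam x)"
    by (intro nn_integral_mono mult_left_mono IH) auto
  also have "\<dots> = (\<integral>\<^sup>+y. A y \<partial>local_rand n lam x) * ennreal (exp (real (length xs) * q * s\<^sup>2))"
    by (simp add: nn_integral_multc)
  also have "\<dots> \<le> ennreal (exp (q * s\<^sup>2)) * ennreal (exp (real (length xs) * q * s\<^sup>2))"
    using local_bound[OF assms, of x] unfolding A_def q_def by (intro mult_right_mono) auto
  also have "\<dots> = ennreal (exp (real (length (x # xs)) * q * s\<^sup>2))"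
    by (simp add: ennreal_mult[symmetric] mult_exp_exp algebra_simps)
  finally show ?case unfolding q_def .
qed

lemma tail_bound:
  assumes "0 \<le> lam / real n" "lam / real n \<le> 1" "0 < s" "s \<le> 1" "\<sigma> = 1 \<or> \<sigma> = -1"
  shows "measure_pmf.prob (rand_all n lam xs)
           {ys. \<sigma> * (bit_sum ys - mm (lam / (2 * real n)) xs) \<ge> a}
         \<le> exp (- s * a + real (length xs) * (lam / (2 * real n)) * s\<^sup>2)"
proof -
  let ?M = "measure_pmf (rand_all n lam xs)"
  let ?D = "\<lambda>ys. \<sigma> * (bit_sum ys - mm (lam / (2 * real n)) xs)"
  have "emeasure ?M {ys \<in> UNIV. ?D ys \<ge> a}
        \<le> ennreal (exp (-s * a)) * (\<integral>\<^sup>+ys. ennreal (exp (s * ?D ys)) * indicator UNIV ys \<partial>?M)"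
    by (rule Chernoff_ineq_nn_integral_ge) (use assms in auto)
  also have "(\<integral>\<^sup>+ys. ennreal (exp (s * ?D ys)) * indicator UNIV ys \<partial>?M)
      = (\<integral>\<^sup>+ys. ennreal (exp ((s * \<sigma>) * (bit_sum ys - mm (lam / (2 * real n)) xs))) \<partial>?M)"
    by (simp add: mult.assoc)
  also have "\<dots> \<le> ennreal (exp (real (length xs) * (lam / (2 * real n)) * (s * \<sigma>)\<^sup>2))"
    by (rule mgf) (use assms in auto)
  also have "(s * \<sigma>)\<^sup>2 = s\<^sup>2" using assms(5) by (auto simp: power_mult_distrib)
  finally have "emeasure ?M {ys. ?D ys \<ge> a}
       \<le> ennreal (exp (-s * a)) * ennreal (exp (real (length xs) * (lam / (2 * real n)) * s\<^sup>2))"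
    by (simp add: mult_left_mono)
  also have "\<dots> = ennreal (exp (- s * a + real (length xs) * (lam / (2 * real n)) * s\<^sup>2))"
    by (simp add: ennreal_mult[symmetric] mult_exp_exp)
  finally show ?thesis
    by (simp add: measure_pmf.emeasure_eq_measure ennreal_le_iff)
qed

theorem theorem4p11:
  fixes n :: nat and \<beta> lam :: real and xs :: "bool list"
  assumes "\<beta> > 0"
    and "real n > lam"
    and "lam \<ge> 2 * ln (2 / \<beta>)"
    and "length xs = n"
  shows "measure_pmf.prob (P_protocol n lam xs)
           {z. \<bar>z - bit_sum xs\<bar> > sqrt (2 * lam * ln (2 / \<beta>)) * (real n / (real n - lam))}
         \<le> \<beta>"
proof (cases "\<beta> \<ge> 1")
  case True
  then show ?thesis using measure_pmf.prob_le_1 order_trans by blast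
next
  case False
  define L where "L = ln (2 / \<beta>)"
  have L: "L > 0" unfolding L_def using False assms(1) by (simp add: ln_gt_zero_iff field_simps)
  have lam: "lam > 0" using assms(3) L unfolding L_def by linarith
  have npos: "real n > 0" using lam assms(2) by linarith
  define p where "p = lam / real n"
  define q where "q = lam / (2 * real n)"
  have p: "0 \<le> p" "p \<le> 1" using lam npos assms(2) by (auto simp: p_def)
  define t where "t = sqrt (2 * lam * L)"
  define s where "s = t / lam"
  have t2: "t\<^sup>2 = 2 * lam * L" unfolding t_def using lam L by simp
  have tpos: "t > 0" unfolding t_def using lam L by simp
  have "t\<^sup>2 \<le> lam\<^sup>2" using t2 assms(3) lam unfolding L_def by (simp add: power2_eq_square)
  then have "t \<le> lam" using tpos lam by (simp add: power2_le_iff_abs_le)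
  then have s: "0 < s" "s \<le> 1" unfolding s_def using tpos lam by auto
  define M where "M = rand_all n lam xs"
  define D where "D = (\<lambda>ys. bit_sum ys - mm q xs)"
  define c where "c = real n / (real n - lam)"
  have cpos: "c > 0" unfolding c_def using npos assms(2) by simp
  have key: "analyzer n lam ys - bit_sum xs = c * D ys" for ys
  proof -
    have mm: "mm q xs = (1 - p) * bit_sum xs + lam / 2"
      unfolding mm_eq assms(4) p_def q_def using npos by (simp add: field_simps)
    have c1: "c * (1 - p) = 1" unfolding c_def p_def using npos assms(2) by (simp add: field_simps)
    have "c * D ys = c * (bit_sum ys - lam / 2) - (c * (1 - p)) * bit_sum xs"
      unfolding D_def mm by (simp add: algebra_simps)
    also have "\<dots> = analyzer n lam ys - bit_sum xs" using c1 by (simp add: analyzer_def c_def[symmetric])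
    finally show ?thesis by simp
  qed
  have sub: "analyzer n lam -` {z. \<bar>z - bit_sum xs\<bar> > t * c}
             \<subseteq> {ys. 1 * D ys \<ge> t} \<union> {ys. (-1) * D ys \<ge> t}"
  proof
    fix ys assume "ys \<in> analyzer n lam -` {z. \<bar>z - bit_sum xs\<bar> > t * c}"
    then have "\<bar>c * D ys\<bar> > t * c" using key by simp
    then have "c * \<bar>D ys\<bar> > c * t" using cpos by (simp add: abs_mult mult.commute)
    then have "\<bar>D ys\<bar> > t" using cpos by simp
    then show "ys \<in> {ys. 1 * D ys \<ge> t} \<union> {ys. (-1) * D ys \<ge> t}" by auto
  qed
  have nq: "real (length xs) * q = lam / 2" unfolding assms(4) q_def using npos by simp
  have st: "s * t = 2 * L" unfolding s_def using t2 lam by (simp add: power2_eq_square field_simps)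
  have ss: "lam / 2 * s\<^sup>2 = L" unfolding s_def using t2 lam by (simp add: power2_eq_square field_simps)
  have exponent: "- s * t + real (length xs) * q * s\<^sup>2 = - L"
  proof -
    have "real (length xs) * q * s\<^sup>2 = lam / 2 * s\<^sup>2" using nq by simp
    then show ?thesis using st ss by linarith
  qed
  have eL: "exp L = 2 / \<beta>" unfolding L_def using assms(1) by simp
  have half: "exp (- L) = \<beta> / 2" by (simp add: exp_minus eL)
  have b1: "measure_pmf.prob M {ys. 1 * D ys \<ge> t} \<le> \<beta> / 2"
    using tail_bound[OF p[unfolded p_def] s, of 1 xs t] exponent half
    unfolding M_def D_def q_def by simp
  have b2: "measure_pmf.prob M {ys. (-1) * D ys \<ge> t} \<le> \<beta> / 2"
    using tail_bound[OF p[unfolded p_def] s, of "-1" xs t] exponent half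
    unfolding M_def D_def q_def by simp
  have "measure_pmf.prob (P_protocol n lam xs) {z. \<bar>z - bit_sum xs\<bar> > t * c}
        = measure_pmf.prob M (analyzer n lam -` {z. \<bar>z - bit_sum xs\<bar> > t * c})"
    unfolding P_eq M_def by simp
  also have "\<dots> \<le> measure_pmf.prob M ({ys. 1 * D ys \<ge> t} \<union> {ys. (-1) * D ys \<ge> t})"
    by (rule measure_pmf.finite_measure_mono[OF sub]) simp
  also have "\<dots> \<le> measure_pmf.prob M {ys. 1 * D ys \<ge> t} + measure_pmf.prob M {ys. (-1) * D ys \<ge> t}"
    by (rule measure_Un_le) auto
  also have "\<dots> \<le> \<beta>" using b1 b2 by simp
  finally show ?thesis unfolding t_def c_def L_def .
qed

end
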